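(* Let $d\ge3$, let $M\ge1$ be a real number, let $|\cdot|_v$ be an absolute value on $\overline{\mathbb Q}$, and let $\lambda,\alpha\in\overline{\mathbb Q}$. If $|\alpha|_v\ge|\lambda|_v/M\ge2M$, then for all integers $0\le n_0\le n$, $$\left|\frac{\log M_{n,v}}{d^n}-\frac{\log M_{n_0,v}}{d^{n_0}}\right|\le\frac{\log 2}{d^{n_0}(d-1)}.$$
   Context: Define $A_0=\alpha$, $B_0=1$, and for $n\ge0$, $A_{n+1}=A_n^d+\lambda B_n^d$, $B_{n+1}=A_nB_n^{d-1}$ (so $[A_n:B_n]$ is the $n$-th iterate of $\alpha$ under $z\mapsto(z^d+\lambda)/z$). Set $M_{n,v}=\max\{|A_n|_v,|B_n|_v\}$. *)

theory Defs
  imports Complex_Main "HOL-Computational_Algebra.Polynomial"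
begin

text \<open>An absolute value on the algebraic closure of Q, modelled as the algebraic
complex numbers (the field of complex numbers algebraic over Q).\<close>
definition abs_value_on_Qbar :: "(complex \<Rightarrow> real) \<Rightarrow> bool" where
  "abs_value_on_Qbar v \<longleftrightarrow>
     (\<forall>x. algebraic x \<longrightarrow> v x \<ge> 0) \<and>
     (\<forall>x. algebraic x \<longrightarrow> (v x = 0 \<longleftrightarrow> x = 0)) \<and>
     (\<forall>x y. algebraic x \<longrightarrow> algebraic y \<longrightarrow> v (x * y) = v x * v y) \<and>
     (\<forall>x y. algebraic x \<longrightarrow> algebraic y \<longrightarrow> v (x + y) \<le> v x + v y)"

fun AB :: "nat \<Rightarrow> complex \<Rightarrow> complex \<Rightarrow> nat \<Rightarrow> complex \<times> complex" where
  "AB d lam alpha 0 = (alpha, 1)"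
| "AB d lam alpha (Suc n) =
     (let (A, B) = AB d lam alpha n in (A ^ d + lam * B ^ d, A * B ^ (d - 1)))"

definition Mnv :: "(complex \<Rightarrow> real) \<Rightarrow> nat \<Rightarrow> complex \<Rightarrow> complex \<Rightarrow> nat \<Rightarrow> real" where
  "Mnv v d lam alpha n = max (v (fst (AB d lam alpha n))) (v (snd (AB d lam alpha n)))"

end

theory Submission imports Defs begin

definition qs :: "rat \<Rightarrow> complex \<Rightarrow> complex" where "qs q z = of_rat q * z"

interpretation Q: vector_space qs
  by unfold_locales (auto simp: qs_def algebra_simps of_rat_add of_rat_mult)

lemma span_mult:
  assumes "u \<in> Q.span S" "w \<in> Q.span R"
  shows "u * w \<in> Q.span {s * r |s r. s \<in> S \<and> r \<in> R}"
proof -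
  let ?SR = "{s * r |s r. s \<in> S \<and> r \<in> R}"
  have base: "s * w \<in> Q.span ?SR" if "s \<in> S" for s
    using assms(2)
  proof (induction w rule: Q.span_induct_alt)
    case base then show ?case by (simp add: Q.span_zero)
  next
    case (step c x y)
    have "s * (qs c x + y) = qs c (s * x) + s * y" by (simp add: qs_def algebra_simps)
    moreover have "s * x \<in> Q.span ?SR" using step that by (blast intro: Q.span_base)
    ultimately show ?case using step by (simp add: Q.span_add Q.span_scale)
  qed
  show ?thesis using assms(1)
  proof (induction u rule: Q.span_induct_alt)
    case base then show ?case by (simp add: Q.span_zero)
  next
    case (step c x y)
    have "(qs c x + y) * w = qs c (x * w) + y * w" by (simp add: qs_def algebra_simps)
    then show ?case using step base by (simp add: Q.span_add Q.span_scale)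
  qed
qed

lemma alg_powers:
  assumes "algebraic x"
  shows "\<exists>m. \<forall>k. x ^ k \<in> Q.span ((\<lambda>i. x ^ i) ` {..<m})"
proof -
  obtain p where pq: "\<forall>i. coeff p i \<in> \<rat>" and p0: "p \<noteq> 0" and px: "poly p x = 0"
    using assms unfolding algebraic_altdef by blast
  have "\<forall>i. \<exists>q. coeff p i = of_rat q" using pq by (metis Rats_cases)
  then obtain r where r: "\<And>i. coeff p i = of_rat (r i)" by metis
  define m where "m = degree p"
  have rm: "r m \<noteq> 0" using p0 r[of m] unfolding m_def by (metis leading_coeff_0_iff of_rat_0)
  let ?B = "(\<lambda>i. x ^ i) ` {..<m}"
  have xm: "x ^ m = (\<Sum>i<m. qs (- r i / r m) (x ^ i))"
  proof -
    have "0 = (\<Sum>i\<le>m. coeff p i * x ^ i)" using px by (simp add: poly_altdef m_def)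
    also have "\<dots> = (\<Sum>i<m. coeff p i * x ^ i) + coeff p m * x ^ m"
      by (simp add: lessThan_Suc_atMost[symmetric])
    finally have "of_rat (r m) * x ^ m = - (\<Sum>i<m. of_rat (r i) * x ^ i)"
      by (simp add: r eq_neg_iff_add_eq_0 add.commute)
    hence "x ^ m = - (\<Sum>i<m. of_rat (r i) * x ^ i) / of_rat (r m)"
      using rm by (simp add: field_simps)
    also have "\<dots> = (\<Sum>i<m. qs (- r i / r m) (x ^ i))"
      by (simp add: qs_def sum_divide_distrib sum_negf of_rat_divide of_rat_minus)
    finally show ?thesis .
  qed
  have "x ^ k \<in> Q.span ?B" for k
  proof (induction k rule: less_induct)
    case (less k)
    show ?case
    proof (cases "k < m")
      case True then show ?thesis by (blast intro: Q.span_base)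
    next
      case False
      have "x ^ k = x ^ (k - m) * x ^ m" using False by (simp add: power_add[symmetric])
      also have "\<dots> = (\<Sum>i<m. qs (- r i / r m) (x ^ (k - m + i)))"
        by (simp add: xm sum_distrib_left qs_def power_add algebra_simps)
      also have "\<dots> \<in> Q.span ?B"
      proof (rule Q.span_sum)
        fix i assume "i \<in> {..<m}"
        hence "k - m + i < k" using False by auto
        thus "qs (- r i / r m) (x ^ (k - m + i)) \<in> Q.span ?B" using less Q.span_scale by blast
      qed
      finally show ?thesis .
    qed
  qed
  thus ?thesis by blast
qed

lemma powers_alg:
  assumes T: "finite T" and sp: "\<And>k. z ^ k \<in> Q.span T"
  shows "algebraic z"
proof (cases "inj_on (\<lambda>k. z ^ k) {..card T}")
  case False
  then obtain i j where ij: "z ^ i = z ^ j" "i \<noteq> j" unfolding inj_on_def by blast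
  let ?p = "monom (1::complex) i - monom 1 j"
  have "?p \<noteq> 0" using ij(2) by (metis coeff_monom eq_iff_diff_eq_0 one_neq_zero)
  moreover have "\<forall>k. coeff ?p k \<in> \<rat>" by (simp add: coeff_monom)
  moreover have "poly ?p z = 0" using ij by (simp add: poly_monom)
  ultimately show ?thesis unfolding algebraic_altdef by blast
next
  case True
  let ?P = "(\<lambda>k. z ^ k) ` {..card T}"
  have cP: "card ?P = Suc (card T)" using True by (simp add: card_image)
  have "Q.dependent ?P"
  proof (rule ccontr)
    assume ind: "Q.independent ?P"
    have "Q.dim ?P = card ?P" using Q.dim_eq_card_independent[OF ind] .
    moreover have "Q.dim ?P \<le> card T" using Q.dim_le_card[OF _ T] sp by blast
    ultimately show False using cP by simp
  qed
  then obtain t u where t: "finite t" "t \<subseteq> ?P" and s0: "(\<Sum>v\<in>t. qs (u v) v) = 0"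
     and v0: "\<exists>v\<in>t. u v \<noteq> 0"
    unfolding Q.dependent_explicit by blast
  have "\<forall>v\<in>t. \<exists>k. v = z ^ k" using t by blast
  then obtain g where g: "\<And>v. v \<in> t \<Longrightarrow> v = z ^ g v" by metis
  have ginj: "inj_on g t" by (metis g inj_onI)
  define p where "p = (\<Sum>v\<in>t. monom (of_rat (u v) :: complex) (g v))"
  have cp: "coeff p k = (\<Sum>v\<in>t. if g v = k then of_rat (u v) else 0)" for k
    by (simp add: p_def coeff_sum coeff_monom)
  have "\<forall>k. coeff p k \<in> \<rat>" unfolding cp by (auto intro!: Rats_sum)
  moreover have "poly p z = 0"
  proof -
    have "poly p z = (\<Sum>v\<in>t. of_rat (u v) * z ^ g v)" by (simp add: p_def poly_sum poly_monom)
    also have "\<dots> = (\<Sum>v\<in>t. qs (u v) v)" using g by (auto simp: qs_def intro!: sum.cong)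
    finally show ?thesis using s0 by simp
  qed
  moreover have "p \<noteq> 0"
  proof
    assume "p = 0"
    obtain v where v: "v \<in> t" "u v \<noteq> 0" using v0 by blast
    have "coeff p (g v) = (\<Sum>w\<in>t. if w = v then of_rat (u w) else 0)"
      unfolding cp using ginj v(1) by (intro sum.cong) (auto dest: inj_onD)
    also have "\<dots> = of_rat (u v)" using t(1) v(1) by simp
    finally show False using \<open>p = 0\<close> v(2) by simp
  qed
  ultimately show ?thesis unfolding algebraic_altdef by blast
qed

lemma alg_add_mult:
  fixes x y :: complex
  assumes "algebraic x" "algebraic y"
  shows "algebraic (x + y) \<and> algebraic (x * y)"
proof -
  obtain m where m: "\<And>k. x ^ k \<in> Q.span ((\<lambda>i. x ^ i) ` {..<m})" using alg_powers[OF assms(1)] by blast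
  obtain n where n: "\<And>k. y ^ k \<in> Q.span ((\<lambda>i. y ^ i) ` {..<n})" using alg_powers[OF assms(2)] by blast
  define T where "T = {s * r |s r. s \<in> (\<lambda>i. x ^ i) ` {..<m} \<and> r \<in> (\<lambda>i. y ^ i) ` {..<n}}"
  have T: "finite T" unfolding T_def
    using finite_image_set2[of "\<lambda>s. s \<in> (\<lambda>i. x ^ i) ` {..<m}" "\<lambda>r. r \<in> (\<lambda>i. y ^ i) ` {..<n}" "(*)"]
    by simp
  have xy: "x ^ a * y ^ b \<in> Q.span T" for a b unfolding T_def by (rule span_mult[OF m n])
  have "(x + y) ^ k \<in> Q.span T" for k
  proof -
    have "(x + y) ^ k = (\<Sum>i\<le>k. qs (of_nat (k choose i)) (x ^ i * y ^ (k - i)))"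
      by (simp add: binomial_ring qs_def algebra_simps)
    also have "\<dots> \<in> Q.span T" by (intro Q.span_sum Q.span_scale xy)
    finally show ?thesis .
  qed
  moreover have "(x * y) ^ k \<in> Q.span T" for k using xy by (simp add: power_mult_distrib)
  ultimately show ?thesis using powers_alg[OF T] by blast
qed


lemma alg_pow: "algebraic (x::complex) \<Longrightarrow> algebraic (x ^ k)"
  by (induction k) (auto simp: alg_add_mult)

lemma AB_Suc:
  "fst (AB d lam alpha (Suc n)) = fst (AB d lam alpha n) ^ d + lam * snd (AB d lam alpha n) ^ d"
  "snd (AB d lam alpha (Suc n)) = fst (AB d lam alpha n) * snd (AB d lam alpha n) ^ (d - 1)"
  by (simp_all add: split_beta Let_def)

theorem proposition5p6:
  fixes d :: nat and M :: real and v :: "complex \<Rightarrow> real" and lam alpha :: complex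
  assumes "d \<ge> 3" and "M \<ge> 1"
    and "abs_value_on_Qbar v"
    and "algebraic lam" and "algebraic alpha"
    and "v alpha \<ge> v lam / M" and "v lam / M \<ge> 2 * M"
  shows "\<forall>n0 n. n0 \<le> n \<longrightarrow>
    \<bar>ln (Mnv v d lam alpha n) / real d ^ n - ln (Mnv v d lam alpha n0) / real d ^ n0\<bar>
      \<le> ln 2 / (real d ^ n0 * (real d - 1))"
proof -
  note av = assms(3)[unfolded abs_value_on_Qbar_def]
  have vnn: "algebraic x \<Longrightarrow> v x \<ge> 0" for x using av by blast
  have v0: "algebraic x \<Longrightarrow> v x = 0 \<longleftrightarrow> x = 0" for x using av by blast
  have vmul: "algebraic x \<Longrightarrow> algebraic y \<Longrightarrow> v (x * y) = v x * v y" for x y using av by blast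
  have vadd: "algebraic x \<Longrightarrow> algebraic y \<Longrightarrow> v (x + y) \<le> v x + v y" for x y using av by blast
  have v1: "v 1 = 1"
  proof -
    have "v 1 = v 1 * v 1" using vmul[of 1 1] by simp
    moreover have "v 1 \<noteq> 0" using v0[of 1] by simp
    ultimately show ?thesis by (metis mult_cancel_right1)
  qed
  have vpow: "algebraic x \<Longrightarrow> v (x ^ k) = v x ^ k" for x k
    by (induction k) (simp_all add: v1 vmul alg_pow)
  have vneg: "algebraic x \<Longrightarrow> v (- x) = v x" for x
  proof -
    assume x: "algebraic x"
    have m1: "algebraic (-1::complex)" by blast
    have "v (-1) * v (-1) = 1" using vmul[OF m1 m1] v1 by simp
    moreover have "v (-1) \<ge> 0" using vnn[OF m1] .
    ultimately have "v (-1) = 1" by (smt (verit) mult_le_cancel_left1 mult_left_le_one_le)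
    thus ?thesis using vmul[OF m1 x] by simp
  qed
  have vsub: "algebraic x \<Longrightarrow> algebraic y \<Longrightarrow> v (x + y) \<ge> v x - v y" for x y
  proof -
    assume x: "algebraic x" and y: "algebraic y"
    have "v x = v ((x + y) + (- y))" by simp
    also have "\<dots> \<le> v (x + y) + v (- y)"
      using vadd alg_add_mult[OF x y] y by blast
    finally show ?thesis using vneg[OF y] by simp
  qed
  define a where "a n = fst (AB d lam alpha n)" for n
  define b where "b n = snd (AB d lam alpha n)" for n
  define l where "l = v lam"
  define L where "L = l / M"
  have lL: "l = M * L" using assms(2) by (simp add: L_def)
  have L2: "L \<ge> 2 * M" using assms(7) by (simp add: L_def l_def)
  have l0: "l \<ge> 0" using vnn[OF assms(4)] by (simp add: l_def)
  have alg: "algebraic (a n) \<and> algebraic (b n)" for n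
    by (induction n) (simp_all add: a_def b_def AB_Suc assms(5) alg_add_mult alg_pow assms(4) del: AB.simps(2))
  have step: "b (Suc n) \<noteq> 0 \<and> v (a (Suc n)) \<ge> L * v (b (Suc n)) \<and>
      v (a n) ^ d / 2 \<le> v (a (Suc n)) \<and> v (a (Suc n)) \<le> 2 * v (a n) ^ d"
    if Suc: "b n \<noteq> 0 \<and> v (a n) \<ge> L * v (b n)" for n
  proof -
    define A where "A = v (a n)"
    define B where "B = v (b n)"
    have B0: "B > 0" using Suc alg[of n] vnn v0 B_def by force
    have AL: "A \<ge> L * B" using Suc by (simp add: A_def B_def)
    have "L * B \<ge> 2 * M * B" using L2 B0 by (simp add: mult_right_mono)
    hence A2: "A \<ge> 2 * M * B" using AL by linarith
    have "2 * M * B > 0" using B0 assms(2) by simp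
    hence A0: "A > 0" using A2 by linarith
    have key1: "A ^ (d - 1) \<ge> 2 * L * B ^ (d - 1)"
    proof -
      have "(2 * M * B) ^ (d - 2) \<le> A ^ (d - 2)" using A2 B0 assms(2) by (intro power_mono) auto
      moreover have "(2 * M) ^ (d - 2) \<ge> 2"
      proof -
        have "(2 * M) ^ (d - 2) \<ge> (2 * M) ^ 1" using assms(1,2) by (intro power_increasing) auto
        thus ?thesis using assms(2) by simp
      qed
      hence "2 * B ^ (d - 2) \<le> (2 * M) ^ (d - 2) * B ^ (d - 2)" using B0
        by (intro mult_right_mono) auto
      ultimately have "A ^ (d - 2) \<ge> 2 * B ^ (d - 2)"
        by (simp add: power_mult_distrib)
      hence "A * A ^ (d - 2) \<ge> (L * B) * (2 * B ^ (d - 2))"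
        using AL B0 L2 A0 assms(2) by (intro mult_mono) auto
      moreover have "A ^ (d - 1) = A * A ^ (d - 2)" "B ^ (d - 1) = B * B ^ (d - 2)"
        using assms(1) by (simp_all add: power_Suc[symmetric] Suc_diff_Suc numeral_eq_Suc)
      ultimately show ?thesis by (simp add: algebra_simps)
    qed
    have key2: "l * B ^ d \<le> A ^ d / 2"
    proof -
      have "A * A ^ (d - 1) \<ge> (L * B) * (2 * L * B ^ (d - 1))"
        using key1 AL B0 L2 A0 assms(2) by (intro mult_mono) auto
      moreover have "A ^ d = A * A ^ (d - 1)" "B ^ d = B * B ^ (d - 1)"
        using assms(1) by (simp_all add: power_Suc[symmetric])
      moreover have "L * L \<ge> M * L" using L2 assms(2) by (intro mult_right_mono) auto
      moreover have "M * L * B ^ d \<le> L * L * B ^ d" using mult_right_mono[OF calculation(4), of "B ^ d"] B0 by simp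
      ultimately show ?thesis using lL by (simp add: algebra_simps)
    qed
    have alA: "algebraic (a n ^ d)" "algebraic (lam * b n ^ d)"
      using alg[of n] assms(4) by (simp_all add: alg_pow alg_add_mult)
    have vl: "v (lam * b n ^ d) = l * B ^ d" using alg[of n] assms(4)
      by (simp add: vmul alg_pow vpow l_def B_def)
    have lower: "v (a (Suc n)) \<ge> A ^ d - l * B ^ d"
      using vsub[OF alA] vl vpow alg[of n] by (simp del: AB.simps(2) add: AB_Suc a_def b_def A_def)
    have "v (b (Suc n)) = A * B ^ (d - 1)" using alg[of n]
      by (simp del: AB.simps(2) add: AB_Suc a_def b_def A_def B_def vmul vpow alg_pow)
    moreover have "A ^ d / 2 \<ge> L * (A * B ^ (d - 1))"
    proof -
      have "A * A ^ (d - 1) \<ge> A * (2 * L * B ^ (d - 1))" using key1 A0 by simp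
      moreover have "A ^ d = A * A ^ (d - 1)" using assms(1) by (simp add: power_Suc[symmetric])
      ultimately show ?thesis by (simp add: algebra_simps)
    qed
    moreover have "b (Suc n) \<noteq> 0"
    proof -
      have "v 0 = 0" using v0[OF algebraic_0] by simp
      hence "a n \<noteq> 0" using A0 A_def by auto
      thus ?thesis using Suc by (simp del: AB.simps(2) add: AB_Suc a_def b_def)
    qed
    moreover have "v (a (Suc n)) \<le> 2 * A ^ d"
    proof -
      have "v (a (Suc n)) \<le> v (a n ^ d) + v (lam * b n ^ d)"
        using vadd[OF alA] by (simp del: AB.simps(2) add: AB_Suc a_def b_def)
      also have "\<dots> = A ^ d + l * B ^ d" using vl vpow alg[of n] A_def by simp
      finally show ?thesis using key2 zero_less_power[OF A0, of d] by linarith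
    qed
    ultimately show ?thesis using lower key2 A_def by simp
  qed
  have inv: "b n \<noteq> 0 \<and> v (a n) \<ge> L * v (b n)" for n
  proof (induction n)
    case 0 thus ?case using assms(6) by (simp add: a_def b_def v1 L_def l_def)
  next
    case (Suc n) thus ?case using step by blast
  qed
  have Apos: "v (a n) > 0" for n
  proof -
    have "v (b n) > 0" using inv[of n] alg[of n] vnn v0 by force
    moreover have "L > 1" using L2 assms(2) by linarith
    ultimately have "L * v (b n) > 0" by simp
    thus ?thesis using inv[of n] by linarith
  qed
  have MA: "Mnv v d lam alpha n = v (a n)" for n
  proof -
    have "v (b n) \<ge> 0" using alg[of n] vnn by blast
    moreover have "L \<ge> 1" using L2 assms(2) by linarith
    ultimately have "v (b n) \<le> L * v (b n)" by (simp add: mult_le_cancel_right1)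
    thus ?thesis using inv[of n] by (simp add: Mnv_def a_def b_def)
  qed
  define f where "f n = ln (v (a n)) / real d ^ n" for n
  have dpos: "real d > 1" using assms(1) by simp
  have fstep: "\<bar>f (Suc n) - f n\<bar> \<le> ln 2 / real d ^ Suc n" for n
  proof -
    let ?A = "v (a n)" and ?A' = "v (a (Suc n))"
    have b1: "?A ^ d / 2 \<le> ?A'" "?A' \<le> 2 * ?A ^ d" using step inv by blast+
    have p: "?A ^ d > 0" using Apos by simp
    have "ln ?A' \<le> ln (2 * ?A ^ d)" using b1 Apos[of "Suc n"] by simp
    hence u: "ln ?A' \<le> ln 2 + real d * ln ?A" using p Apos[of n] by (simp add: ln_mult ln_realpow)
    have "ln (?A ^ d / 2) \<le> ln ?A'" using b1 p by simp
    hence lo: "ln ?A' \<ge> real d * ln ?A - ln 2" using p Apos[of n] by (simp add: ln_div ln_realpow)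
    have "f (Suc n) - f n = (ln ?A' - real d * ln ?A) / real d ^ Suc n"
      using dpos by (simp add: f_def field_simps)
    moreover have "\<bar>ln ?A' - real d * ln ?A\<bar> \<le> ln 2" using u lo by linarith
    ultimately show ?thesis using dpos by (simp add: abs_div divide_right_mono)
  qed
  define c where "c = ln 2 / (real d - 1)"
  have tele: "\<bar>f n - f n0\<bar> \<le> c * (1 / real d ^ n0 - 1 / real d ^ n)" if "n0 \<le> n" for n0 n
    using that
  proof (induction n rule: dec_induct)
    case base thus ?case by simp
  next
    case (step n)
    have eq: "c * (1 / real d ^ n0 - 1 / real d ^ n) + ln 2 / real d ^ Suc n
        = c * (1 / real d ^ n0 - 1 / real d ^ Suc n)"
      using dpos by (simp add: c_def field_simps)
    have "\<bar>f (Suc n) - f n0\<bar> \<le> \<bar>f (Suc n) - f n\<bar> + \<bar>f n - f n0\<bar>" by linarith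
    also have "\<dots> \<le> ln 2 / real d ^ Suc n + c * (1 / real d ^ n0 - 1 / real d ^ n)"
      using fstep step.IH by (intro add_mono) auto
    finally show ?case using eq by linarith
  qed
  show ?thesis
  proof (intro allI impI)
    fix n0 n :: nat assume h: "n0 \<le> n"
    have c0: "c \<ge> 0" using dpos by (simp add: c_def)
    have "c * (1 / real d ^ n0 - 1 / real d ^ n) \<le> c * (1 / real d ^ n0)"
      using c0 dpos by (intro mult_left_mono) auto
    also have "\<dots> = ln 2 / (real d ^ n0 * (real d - 1))" by (simp add: c_def)
    finally show "\<bar>ln (Mnv v d lam alpha n) / real d ^ n - ln (Mnv v d lam alpha n0) / real d ^ n0\<bar>
      \<le> ln 2 / (real d ^ n0 * (real d - 1))"
      using tele[OF h] by (simp add: MA f_def)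
  qed
qed
end
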